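(* Let $\mathbf{f} = (f_n)_{n\ge 1}$ be the ordinary paperfolding word over $\{0,1\}$, let $\rho(n)$ be its abelian complexity function, and for $i\ge1$ let $A(i)=\min\{n\in\mathbb{N} : \rho(n)=i+1\}$. Then for all $i\ge 1$, \[ A(i)=\begin{cases}\dfrac{2^i+1}{3} & \text{if } i \text{ is odd},\\[2mm] \dfrac{2^i+2}{3} & \text{if } i \text{ is even}.\end{cases} \]
   Context: The ordinary paperfolding word $\mathbf{f}=(f_n)_{n\ge1}$ over $\{0,1\}$ is defined as follows: for $n\ge 1$ write $n=n'2^k$ with $n'$ odd; then $f_n=0$ if $n'\equiv 1 \pmod 4$ and $f_n=1$ if $n'\equiv 3\pmod 4$. Thus $\mathbf{f}=0010011000110110\cdots$. A factor of $\mathbf{f}$ is a finite contiguous block $f_i f_{i+1}\cdots f_{i+n-1}$. Two words $u,v$ over $\{0,1\}$ are abelian equivalent if one is a rearrangement of the other. For $n\ge1$, the abelian complexity $\rho(n)$ is the number of abelian equivalence classes among the factors of $\mathbf{f}$ of length $n$. Here $\mathbb{N}=\{1,2,3,\dots\}$. *)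

theory Defs
  imports Main "HOL-Computational_Algebra.Primes"
begin

definition odd_part :: "nat \<Rightarrow> nat" where
  "odd_part n = n div 2 ^ multiplicity (2::nat) n"

(* ordinary paperfolding word, indexed from 1 *)
definition pf :: "nat \<Rightarrow> nat" where
  "pf n = (if odd_part n mod 4 = 1 then 0 else 1)"

definition pf_factor :: "nat \<Rightarrow> nat \<Rightarrow> nat list" where
  "pf_factor i n = map pf [i..<i+n]"

definition abel_eq :: "nat list \<Rightarrow> nat list \<Rightarrow> bool" where
  "abel_eq u v \<longleftrightarrow> mset u = mset v"

definition rho :: "nat \<Rightarrow> nat" where
  "rho n = card ((\<lambda>w. mset w) ` {pf_factor i n | i. i \<ge> 1})"

definition A :: "nat \<Rightarrow> nat" where
  "A i = (LEAST n. n \<ge> 1 \<and> rho n = i + 1)"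

end

theory Submission
  imports Defs
begin


lemma odd_part_odd: "odd p \<Longrightarrow> odd_part p = p"
  unfolding odd_part_def by (simp add: not_dvd_imp_multiplicity_0)

lemma odd_part_double: "q \<noteq> 0 \<Longrightarrow> odd_part (2*q) = odd_part q"
  unfolding odd_part_def by (simp add: multiplicity_times_same)

lemma pf_double: "q \<noteq> 0 \<Longrightarrow> pf (2*q) = pf q"
  unfolding pf_def by (simp add: odd_part_double)

lemma pf_le1: "pf p \<le> 1" unfolding pf_def by simp

lemma pf_odd: "odd p \<Longrightarrow> pf p = (if p mod 4 = 3 then 1 else 0)"
  unfolding pf_def using odd_part_odd[of p] by presburger

definition ones :: "nat \<Rightarrow> nat" where "ones N = sum pf {1..<Suc N}"

lemma ones_0[simp]: "ones 0 = 0" by (simp add: ones_def)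
lemma ones_Suc: "ones (Suc N) = ones N + pf (Suc N)"
  by (simp add: ones_def)

lemma ones_rec: "ones N = (N+1) div 4 + ones (N div 2)"
proof (induction N)
  case 0 then show ?case by simp
next
  case (Suc N)
  show ?case
  proof (cases "even (Suc N)")
    case True
    then obtain q where q: "Suc N = 2*q" "q \<noteq> 0" by (metis dvdE nat.distinct(1) mult_0_right)
    have "N div 2 = q - 1" using q by presburger
    moreover have "ones q = ones (q - 1) + pf q" using q ones_Suc[of "q-1"] by simp
    moreover have "(Suc N + 1) div 4 = (N+1) div 4" using True by presburger
    ultimately show ?thesis using Suc q pf_double[of q] ones_Suc[of N] by simp
  next
    case False
    have "(Suc N + 1) div 4 = (N+1) div 4 + (if Suc N mod 4 = 3 then 1 else 0)" using False by presburger
    moreover have "Suc N div 2 = N div 2" using False by presburger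
    ultimately show ?thesis using Suc pf_odd[of "Suc N"] False ones_Suc[of N] by simp
  qed
qed

definition cc :: "nat \<Rightarrow> int" where "cc N = (if N mod 4 = 1 \<or> N mod 4 = 2 then 1 else 0)"

fun F :: "nat \<Rightarrow> int" where
  "F 0 = 0"
| "F (Suc n) = cc (Suc n) + F (Suc n div 2)"

lemma F_rec: "F N = cc N + F (N div 2)"
  by (cases N) (auto simp: cc_def)

declare F.simps(2)[simp del]

lemma ones_F: "2 * int (ones N) + F N = int N"
proof (induction N rule: less_induct)
  case (less N)
  show ?case
  proof (cases "N = 0")
    case True then show ?thesis by simp
  next
    case False
    then have "2 * int (ones (N div 2)) + F (N div 2) = int (N div 2)" using less by simp
    moreover have "2 * int ((N+1) div 4) + cc N + int (N div 2) = int N"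
      unfolding cc_def by presburger
    ultimately show ?thesis using ones_rec[of N] F_rec[of N] by simp
  qed
qed

lemma F_par: "even (F N - int N)"
proof -
  have "F N - int N = 2 * (- int (ones N))" using ones_F[of N] by simp
  then show ?thesis by presburger
qed

lemma F_step: "F (Suc a) - F a = 1 - 2 * int (pf (Suc a))"
  using ones_F[of a] ones_F[of "Suc a"] ones_Suc[of a] by simp

lemma pow3: "(2::nat)^e mod 3 = (if even e then 1 else 2)"
  proof (induction e)
  case 0 then show ?case by simp
next
  case (Suc e)
  have "(2::nat)^Suc e mod 3 = (2 * (2^e mod 3)) mod 3" by (simp add: mod_mult_right_eq)
  then show ?case using Suc by auto
qed

lemma div_split_lem: "((a::nat) + n) div 2 - a div 2 = (n + a mod 2) div 2"
proof -
  have "a + n = 2 * (a div 2) + (n + a mod 2)" by simp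
  then have "(a + n) div 2 = a div 2 + (n + a mod 2) div 2" by (metis div_mult_self2 add.commute zero_neq_numeral)
  then show ?thesis by simp
qed

lemma hlp1: "(n::nat) \<ge> 2 \<Longrightarrow> m \<le> 1 \<Longrightarrow> (n + m) div 2 \<ge> 1" by presburger
lemma hlp2: "(n::nat) \<ge> 2 \<Longrightarrow> m \<le> 1 \<Longrightarrow> (n + m) div 2 < n" by presburger
lemma hlp3: "(m::nat) \<le> 1 \<Longrightarrow> 2 * ((n + m) div 2) \<le> n + 1" by presburger
lemma hlp4: "(m::nat) \<le> 1 \<Longrightarrow> even n \<Longrightarrow> 2 * ((n + m) div 2) = n" by presburger

lemma bound: "n \<ge> 1 \<Longrightarrow> 2 ^ nat \<bar>F (a+n) - F a\<bar> \<le> 3 * n"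
proof (induction n arbitrary: a rule: less_induct)
  case (less n)
  show ?case
  proof (cases "n = 1")
    case True
    have "pf (Suc a) = 0 \<or> pf (Suc a) = 1" using pf_le1[of "Suc a"] by linarith
    then have "\<bar>F (Suc a) - F a\<bar> = 1" using F_step[of a] by auto
    then have "\<bar>F (a+n) - F a\<bar> = 1" using True by simp
    then show ?thesis using True by simp
  next
    case False
    define n' where "n' = (a+n) div 2 - a div 2"
    have n2: "n \<ge> 2" using False less.prems by simp
    have nd: "n' = (n + a mod 2) div 2" unfolding n'_def by (rule div_split_lem)
    have m2: "a mod 2 \<le> 1" by simp
    have n'1: "n' \<ge> 1" "n' < n" using n2 m2 unfolding nd by (rule hlp1, rule hlp2)
    have n'2: "2*n' \<le> n + 1" "even n \<Longrightarrow> 2*n' = n" using m2 unfolding nd by (rule hlp3, rule hlp4)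
    have eq: "(a+n) div 2 = a div 2 + n'" unfolding n'_def by simp
    have IH: "2 ^ nat \<bar>F (a div 2 + n') - F (a div 2)\<bar> \<le> 3 * n'"
      using less.IH[OF n'1(2) n'1(1)] .
    define d where "d = F (a+n) - F a"
    define d' where "d' = F (a div 2 + n') - F (a div 2)"
    have "d = cc (a+n) - cc a + d'" unfolding d_def d'_def
      using F_rec[of "a+n"] F_rec[of a] eq by simp
    moreover have "\<bar>cc (a+n) - cc a\<bar> \<le> 1" unfolding cc_def by auto
    ultimately have e: "nat \<bar>d\<bar> \<le> nat \<bar>d'\<bar> + 1" by linarith
    have "(2::nat) ^ nat \<bar>d\<bar> \<le> 2 ^ (nat \<bar>d'\<bar> + 1)"
      using e by (intro power_increasing) auto
    also have "\<dots> \<le> 6 * n'" using IH unfolding d'_def by simp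
    finally have P: "(2::nat) ^ nat \<bar>d\<bar> \<le> 6 * n'" .
    have par: "even (nat \<bar>d\<bar>) = even n"
    proof -
      have dn: "d - int n = (F (a+n) - int (a+n)) - (F a - int a)" unfolding d_def by simp
      then have "even (d - int n)" by (subst dn) (rule dvd_diff[OF F_par[of "a+n"] F_par[of a]])
      then have "even d = even n" by presburger
      then show ?thesis by (cases "d \<ge> 0") (auto simp: even_nat_iff)
    qed
    show ?thesis
    proof (cases "even n")
      case True
      then show ?thesis using P n'2(2) unfolding d_def by simp
    next
      case odd: False
      then have o: "odd (nat \<bar>d\<bar>)" using par by simp
      then have m3: "(2::nat) ^ nat \<bar>d\<bar> mod 3 = 2" using pow3 by simp
      have ev: "even ((2::nat) ^ nat \<bar>d\<bar>)" using o by (cases "nat \<bar>d\<bar>") auto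
      define Q where "Q = (2::nat) ^ nat \<bar>d\<bar>"
      have "Q \<le> 3*n + 3" using P n'2(1) unfolding Q_def by linarith
      then have "Q \<le> 3*n" using m3 ev odd unfolding Q_def[symmetric] by presburger
      then show ?thesis unfolding Q_def d_def by simp
    qed
  qed
qed



lemma rep01: "set_mset M \<subseteq> {0::nat,1} \<Longrightarrow> sum_mset M \<le> size M \<and> M = replicate_mset (size M - sum_mset M) 0 + replicate_mset (sum_mset M) 1"
proof (induction M)
  case empty then show ?case by simp
next
  case (add x M)
  then have x: "x = 0 \<or> x = 1" and IH: "sum_mset M \<le> size M \<and> M = replicate_mset (size M - sum_mset M) 0 + replicate_mset (sum_mset M) 1" by auto
  show ?case
  proof (cases "x = 0")
    case True
    have "Suc (size M) - sum_mset M = Suc (size M - sum_mset M)" using IH by linarith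
    then show ?thesis using IH True by (metis add_mset_add_single replicate_mset_Suc size_add_mset sum_mset.add_mset union_mset_add_mset_left add_0 le_SucI)
  next
    case False
    then have "x = 1" using x by simp
    then show ?thesis using IH by (metis add_mset_add_single replicate_mset_Suc size_add_mset sum_mset.add_mset union_mset_add_mset_right Suc_le_mono diff_Suc_Suc plus_1_eq_Suc)
  qed
qed

lemma inj01: "set_mset M1 \<subseteq> {0::nat,1} \<Longrightarrow> set_mset M2 \<subseteq> {0,1} \<Longrightarrow> size M1 = size M2 \<Longrightarrow> sum_mset M1 = sum_mset M2 \<Longrightarrow> M1 = M2"
  using rep01[of M1] rep01[of M2] by metis



definition C :: "nat \<Rightarrow> nat \<Rightarrow> int" where "C n a = int (ones (a+n)) - int (ones a)"

lemma sum_factor: "int (sum_list (pf_factor (Suc a) n)) = C n a"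
proof -
  have "sum_list (pf_factor (Suc a) n) = sum pf {Suc a..<Suc a + n}"
    unfolding pf_factor_def by (simp add: sum_set_upt_conv_sum_list_nat[symmetric])
  moreover have "ones (a+n) = sum pf {1..<Suc a} + sum pf {Suc a..<Suc a + n}"
    unfolding ones_def by (subst sum.atLeastLessThan_concat) auto
  moreover have "ones a = sum pf {1..<Suc a}" unfolding ones_def by simp
  ultimately show ?thesis unfolding C_def by simp
qed

lemma C_F: "2 * C n a = int n - (F (a+n) - F a)"
  unfolding C_def using ones_F[of "a+n"] ones_F[of a] by simp

lemma C_step: "C n (Suc a) \<le> C n a + 1"
  unfolding C_def using ones_Suc[of "a+n"] ones_Suc[of a] pf_le1[of "Suc (a+n)"] by simp

lemma pf01: "pf p \<in> {0,1}" unfolding pf_def by simp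

lemma rho_C: "rho n = card (range (C n))"
proof -
  define S where "S = {pf_factor i n | i. i \<ge> 1}"
  define g where "g = (\<lambda>M. int (sum_mset M))"
  have S01: "set_mset (mset w) \<subseteq> {0,1} \<and> size (mset w) = n" if "w \<in> S" for w
    using that unfolding S_def pf_factor_def using pf01 by (auto, metis Suc_leI le_zero_eq not_less_eq_eq pf_le1)
  have inj: "inj_on g (mset ` S)"
  proof (rule inj_onI)
    fix M1 M2 assume m: "M1 \<in> mset ` S" "M2 \<in> mset ` S" "g M1 = g M2"
    then have "sum_mset M1 = sum_mset M2" unfolding g_def by (simp only: of_nat_eq_iff)
    moreover obtain w1 w2 where "w1 \<in> S" "w2 \<in> S" "M1 = mset w1" "M2 = mset w2" using m by blast
    ultimately show "M1 = M2" using S01 inj01 by metis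
  qed
  have im: "g ` mset ` S = range (C n)"
  proof
    show "g ` mset ` S \<subseteq> range (C n)"
    proof
      fix x assume "x \<in> g ` mset ` S"
      then obtain i where i: "i \<ge> 1" "x = g (mset (pf_factor i n))" unfolding S_def by auto
      then obtain a where "i = Suc a" by (metis Suc_le_D One_nat_def)
      then show "x \<in> range (C n)" using i sum_factor[of a n] unfolding g_def by (simp add: sum_mset_sum_list)
    qed
    show "range (C n) \<subseteq> g ` mset ` S"
    proof
      fix x assume "x \<in> range (C n)"
      then obtain a where "x = C n a" by auto
      then have "x = g (mset (pf_factor (Suc a) n))" using sum_factor[of a n] unfolding g_def by (simp add: sum_mset_sum_list)
      moreover have "pf_factor (Suc a) n \<in> S" unfolding S_def by auto
      ultimately show "x \<in> g ` mset ` S" by blast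
    qed
  qed
  have "rho n = card (mset ` S)" unfolding rho_def S_def by simp
  also have "\<dots> = card (g ` mset ` S)" using card_image[OF inj] by simp
  finally show ?thesis using im by simp
qed

lemma C_upper: assumes "\<And>a. \<bar>F (a+n) - F a\<bar> \<le> K"
  shows "finite (range (C n)) \<and> card (range (C n)) \<le> nat K + 1"
proof -
  have K0: "K \<ge> 0" using assms[of 0] by simp
  have sub: "range (C n) \<subseteq> {(int n - K + 1) div 2 .. (int n + K) div 2}"
  proof
    fix x assume "x \<in> range (C n)"
    then obtain a where x: "x = C n a" by auto
    have "2 * x = int n - (F (a+n) - F a)" using C_F x by simp
    moreover have "\<bar>F (a+n) - F a\<bar> \<le> K" by (rule assms)
    ultimately show "x \<in> {(int n - K + 1) div 2 .. (int n + K) div 2}" by auto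
  qed
  have "card {(int n - K + 1) div 2 .. (int n + K) div 2} \<le> nat K + 1"
    using K0 by simp
  then show ?thesis using sub card_mono[OF _ sub] finite_subset[OF sub] by fastforce
qed

lemma discrete_ivt:
  fixes f :: "nat \<Rightarrow> int"
  assumes step: "\<And>k. f (Suc k) \<le> f k + 1"
  shows "x \<le> y \<Longrightarrow> f x \<le> v \<Longrightarrow> v \<le> f y \<Longrightarrow> \<exists>k. f k = v"
proof (induction y)
  case 0 then show ?case by auto
next
  case (Suc y)
  show ?case
  proof (cases "v = f (Suc y)")
    case True then show ?thesis by blast
  next
    case False
    show ?thesis
    proof (cases "x = Suc y")
      case True then show ?thesis using Suc False by auto
    next
      case False2: False
      have "v \<le> f y" using step[of y] Suc.prems False by linarith
      then show ?thesis using Suc False2 by auto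
    qed
  qed
qed



fun alt :: "nat \<Rightarrow> nat" where
  "alt 0 = 0"
| "alt (Suc k) = 2 * alt k + (if even k then 1 else 0)"

lemma alt_mod: "alt k mod 2 = (if odd k then 1 else 0)"
  by (induction k) auto

lemma F_alt: "F (alt k) = int k"
proof (induction k)
  case 0 then show ?case by simp
next
  case (Suc k)
  have m: "alt k mod 2 = (if odd k then 1 else 0)" by (rule alt_mod)
  define b where "b = (if even k then 1 else 0 :: nat)"
  have a: "alt (Suc k) = 2 * alt k + b" unfolding b_def by simp
  have "(2 * alt k + b) mod 4 = 1 \<or> (2 * alt k + b) mod 4 = 2" using m unfolding b_def by presburger
  then have c: "cc (alt (Suc k)) = 1" unfolding cc_def a by auto
  have d: "alt (Suc k) div 2 = alt k" unfolding a b_def by simp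
  have "F (alt (Suc k)) = cc (alt (Suc k)) + F (alt (Suc k) div 2)" by (rule F_rec)
  also have "\<dots> = 1 + int k" unfolding c d Suc by simp
  finally show ?case by simp
qed

lemma alt3: "3 * alt k + (if odd k then 1 else 2) = 2 ^ (k+1)"
proof (induction k)
  case 0 then show ?case by simp
next
  case (Suc k)
  have q: "(2::nat) ^ (Suc k + 1) = 2 * 2 ^ (k+1)" by simp
  show ?case
  proof (cases "even k")
    case True
    then have "3 * alt k + 2 = 2 ^ (k+1)" using Suc by simp
    then show ?thesis using True unfolding q by simp
  next
    case False
    then have "3 * alt k + 1 = 2 ^ (k+1)" using Suc by simp
    then show ?thesis using False unfolding q by simp
  qed
qed

lemma aux1: assumes "(P::nat) \<ge> 2" "even P" shows "(2*P-1) mod 4 = 3 \<and> (2*P-1) div 2 = P - 1"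
proof -
  obtain k where k: "P = 2 * k" using assms(2) by blast
  then have "k \<ge> 1" using assms(1) by simp
  then have "2*P-1 = 4*(k-1) + 3" using k by simp
  then show ?thesis using k by simp
qed
lemma aux2: "even (P::nat) \<Longrightarrow> (2*(3*P)) mod 4 = 0"
  by (elim evenE) simp

lemma F_pm1: "i \<ge> 1 \<Longrightarrow> F (2^i - 1) = 1"
proof (induction i rule: dec_induct)
  case base then show ?case using F_rec[of 1] by (simp add: cc_def)
next
  case (step i)
  define P where "P = (2::nat)^i"
  have "(2::nat)^1 \<le> 2^i" using step(1) by (intro power_increasing) auto
  then have P: "P \<ge> 2" "even P" unfolding P_def using step(1) by (auto simp: Suc_le_eq)
  have "(2::nat)^Suc i - 1 = 2 * P - 1" unfolding P_def by simp
  moreover have "(2 * P - 1) mod 4 = 3" using aux1[OF P] by simp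
  then have "cc (2 * P - 1) = 0" unfolding cc_def by simp
  moreover have "(2 * P - 1) div 2 = P - 1" using aux1[OF P] by simp
  ultimately show ?case using F_rec[of "2 * P - 1"] step(3) unfolding P_def by simp
qed

lemma F_3pow: "i \<ge> 1 \<Longrightarrow> F (3 * 2^i) = 2"
proof (induction i rule: dec_induct)
  case base then show ?case using F_rec[of 6] F_rec[of 3] F_rec[of 1] by (simp add: cc_def)
next
  case (step i)
  define P where "P = (2::nat)^i"
  have P: "even P" unfolding P_def using step(1) by (simp add: Suc_le_eq)
  have "(3::nat) * 2^Suc i = 2 * (3 * P)" unfolding P_def by simp
  moreover have "(2 * (3 * P)) mod 4 = 0" using aux2[OF P] by simp
  then have "cc (2 * (3 * P)) = 0" unfolding cc_def by simp
  ultimately show ?case using F_rec[of "2 * (3 * P)"] step(3) unfolding P_def by simp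
qed



lemma small_rho: assumes "1 \<le> m" "3 * m < 2 ^ k" shows "rho m \<le> k \<and> finite (range (C m))"
proof -
  have k1: "k \<ge> 1" using assms by (cases k) auto
  have b: "\<bar>F (a+m) - F a\<bar> \<le> int k - 1" for a
  proof -
    have pk: "(2::nat) ^ nat \<bar>F (a+m) - F a\<bar> < 2 ^ k" using bound[OF assms(1), of a] assms(2) by linarith
    have "nat \<bar>F (a+m) - F a\<bar> < k" using power_less_imp_less_exp[OF _ pk] by simp
    then show ?thesis by linarith
  qed
  have "finite (range (C m)) \<and> card (range (C m)) \<le> nat (int k - 1) + 1" by (rule C_upper) (rule b)
  then show ?thesis using rho_C[of m] k1 by auto
qed

lemma div3a: "(P::nat) mod 3 = 2 \<Longrightarrow> 3 * ((P + 1) div 3) = P + 1" by presburger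
lemma div3b: "(P::nat) mod 3 = 1 \<Longrightarrow> 3 * ((P + 2) div 3) = P + 2" by presburger

theorem proposition3:
  fixes i :: nat
  assumes "i \<ge> 1"
  shows "A i = (if odd i then (2 ^ i + 1) div 3 else (2 ^ i + 2) div 3)"
proof -
  define v where "v = (if odd i then (2 ^ i + 1) div 3 else (2 ^ i + 2) div 3 :: nat)"
  define P where "P = (2::nat) ^ i"
  have "(2::nat)^1 \<le> 2^i" using assms by (intro power_increasing) auto
  then have P2: "P \<ge> 2" unfolding P_def by simp
  have v3: "3 * v = P + (if odd i then 1 else 2)"
    unfolding v_def P_def using pow3[of i] div3a div3b by auto
  have alt1: "3 * alt (i+1) + (if odd i then 2 else 1) = 4 * P"
    using alt3[of "i+1"] unfolding P_def by (cases "even i") (simp_all add: power_add del: alt.simps)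
  have alt2: "3 * alt (i+2) + (if odd i then 1 else 2) = 8 * P"
    using alt3[of "i+2"] unfolding P_def by (cases "even i") (simp_all add: power_add del: alt.simps)
  have F1: "(P - 1) + v = alt (i+1)" using v3 alt1 P2 by (cases "odd i") auto
  have F2: "alt (i+2) + v = 3 * P" using v3 alt2 by (cases "odd i") auto
  have F3: "P - 1 \<le> alt (i+2)" using v3 alt2 P2 by (cases "odd i") auto
  have v1: "v \<ge> 1" using v3 P2 by (cases "odd i") auto
  have P4: "P \<ge> 4" if "even i"
  proof -
    have "i \<noteq> 1" using that by auto
    then have "i \<ge> 2" using assms by simp
    then have "(2::nat)^2 \<le> 2^i" by (intro power_increasing) auto
    then show ?thesis unfolding P_def by simp
  qed
  have less: "3 * v < 2 ^ (i+1)" using v3 P2 P4 unfolding P_def by (cases "odd i") auto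
  have up: "rho v \<le> i + 1" and fin: "finite (range (C v))" using small_rho[OF v1 less] by auto
  define a1 where "a1 = P - 1"
  define a2 where "a2 = alt (i+2)"
  have c1: "2 * C v a1 = int v - int i"
    using C_F[of v a1] F1 F_alt[of "i+1"] F_pm1[OF assms] unfolding a1_def P_def by simp
  have c2: "2 * C v a2 = int v + int i"
    using C_F[of v a2] F2 F_alt[of "i+2"] F_3pow[OF assms] unfolding a2_def P_def by simp
  have sub: "{C v a1 .. C v a2} \<subseteq> range (C v)"
  proof
    fix x assume x: "x \<in> {C v a1 .. C v a2}"
    have "\<exists>k. C v k = x"
      by (rule discrete_ivt[of "C v" a1 a2 x]) (use C_step x F3 in \<open>auto simp: a1_def a2_def\<close>)
    then show "x \<in> range (C v)" by auto
  qed
  have "card {C v a1 .. C v a2} = i + 1" using c1 c2 by simp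
  then have "i + 1 \<le> rho v" using card_mono[OF fin sub] rho_C[of v] by simp
  then have rv: "rho v = i + 1" using up by simp
  have "A i = v"
    unfolding A_def
  proof (rule Least_equality)
    show "1 \<le> v \<and> rho v = i + 1" using v1 rv by simp
  next
    fix m assume m: "1 \<le> m \<and> rho m = i + 1"
    show "v \<le> m"
    proof (rule ccontr)
      assume "\<not> v \<le> m"
      then have "3 * m < 2 ^ i" using v3 unfolding P_def by (cases "odd i") auto
      then have "rho m \<le> i" using small_rho m by blast
      then show False using m by simp
    qed
  qed
  then show ?thesis unfolding v_def .
qed


end
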